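(* For any integers $n \ge k \ge 1$ and any positive integers $n_1 \le n_2 \le \cdots \le n_k$ with $n_1 + \cdots + n_k = n$, the graph $G(n_1,\ldots,n_k)$ has exactly $kn - \binom{k+1}{2}$ edges.
   Context: The graph $G(n_1,\ldots,n_k)$: for each $1 \le i \le k$ it contains a path on distinct vertices $v_{i,1},\ldots,v_{i,n_i}$ (edges $v_{i,a}v_{i,a+1}$ for $1 \le a < n_i$), with all $n$ vertices distinct, and additionally, for each $1 \le i < j \le k$, the following edges: (i) if $n_i > 1$, the edge $v_{i,a}v_{j,a}$ for each $1 \le a < n_i$; (ii) if $n_j > 1$, the edge $v_{i,a+1}v_{j,a}$ for each $1 \le a < n_i$; (iii) the edge $v_{i,n_i}v_{j,a}$ for each $n_i \le a \le n_j$. These are all the edges. *)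

theory Defs
  imports Main
begin

text \<open>The sizes are given by a function ns on indices 1..k.
  Vertex v_{i,a} is the pair (i,a) with 1 \<le> i \<le> k, 1 \<le> a \<le> ns i.\<close>

definition G_vertices :: "nat \<Rightarrow> (nat \<Rightarrow> nat) \<Rightarrow> (nat \<times> nat) set" where
  "G_vertices k ns = {(i, a) | i a. 1 \<le> i \<and> i \<le> k \<and> 1 \<le> a \<and> a \<le> ns i}"

definition G_edges :: "nat \<Rightarrow> (nat \<Rightarrow> nat) \<Rightarrow> (nat \<times> nat) set set" where
  "G_edges k ns =
     {{(i, a), (i, a + 1)} | i a. 1 \<le> i \<and> i \<le> k \<and> 1 \<le> a \<and> a < ns i}
   \<union> {{(i, a), (j, a)} | i j a. 1 \<le> i \<and> i < j \<and> j \<le> k \<and> ns i > 1 \<and> 1 \<le> a \<and> a < ns i}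
   \<union> {{(i, a + 1), (j, a)} | i j a. 1 \<le> i \<and> i < j \<and> j \<le> k \<and> ns j > 1 \<and> 1 \<le> a \<and> a < ns i}
   \<union> {{(i, ns i), (j, a)} | i j a. 1 \<le> i \<and> i < j \<and> j \<le> k \<and> ns i \<le> a \<and> a \<le> ns j}"

end

theory Submission
  imports Defs
begin

definition PE :: "(nat \<Rightarrow> nat) \<Rightarrow> nat \<Rightarrow> (nat \<times> nat) set set" where
  "PE ns m = (\<lambda>a. {(m,a),(m,a+1)}) ` {1..<ns m}"
definition AE :: "(nat \<Rightarrow> nat) \<Rightarrow> nat \<Rightarrow> nat \<Rightarrow> (nat \<times> nat) set set" where
  "AE ns i m = (\<lambda>a. {(i,a),(m,a)}) ` {1..<ns i}"
definition BE :: "(nat \<Rightarrow> nat) \<Rightarrow> nat \<Rightarrow> nat \<Rightarrow> (nat \<times> nat) set set" where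
  "BE ns i m = (\<lambda>a. {(i,a+1),(m,a)}) ` {1..<ns i}"
definition CE :: "(nat \<Rightarrow> nat) \<Rightarrow> nat \<Rightarrow> nat \<Rightarrow> (nat \<times> nat) set set" where
  "CE ns i m = (\<lambda>a. {(i,ns i),(m,a)}) ` {ns i..ns m}"
definition NE :: "(nat \<Rightarrow> nat) \<Rightarrow> nat \<Rightarrow> (nat \<times> nat) set set" where
  "NE ns m = PE ns m \<union> (\<Union>i\<in>{1..<m}. AE ns i m \<union> BE ns i m \<union> CE ns i m)"

lemma G_eq:
  assumes mono: "\<forall>i j. 1 \<le> i \<and> i \<le> j \<and> j \<le> k \<longrightarrow> ns i \<le> ns j"
  shows "G_edges k ns = (\<Union>m\<in>{1..k}. NE ns m)"
proof
  show "G_edges k ns \<subseteq> (\<Union>m\<in>{1..k}. NE ns m)"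
  proof
    fix e assume "e \<in> G_edges k ns"
    then consider
      (p) i a where "e = {(i, a), (i, a + 1)}" "1 \<le> i" "i \<le> k" "1 \<le> a" "a < ns i"
    | (a) i j a where "e = {(i, a), (j, a)}" "1 \<le> i" "i < j" "j \<le> k" "1 \<le> a" "a < ns i"
    | (b) i j a where "e = {(i, a+1), (j, a)}" "1 \<le> i" "i < j" "j \<le> k" "1 \<le> a" "a < ns i"
    | (c) i j a where "e = {(i, ns i), (j, a)}" "1 \<le> i" "i < j" "j \<le> k" "ns i \<le> a" "a \<le> ns j"
      unfolding G_edges_def by blast
    then show "e \<in> (\<Union>m\<in>{1..k}. NE ns m)"
    proof cases
      case p
      hence "e \<in> NE ns i" unfolding NE_def PE_def by auto
      thus ?thesis using p by auto
    next
      case a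
      hence "e \<in> AE ns i j" unfolding AE_def by auto
      hence "e \<in> NE ns j" unfolding NE_def using a by auto
      thus ?thesis using a by auto
    next
      case b
      hence "e \<in> BE ns i j" unfolding BE_def by auto
      hence "e \<in> NE ns j" unfolding NE_def using b by auto
      thus ?thesis using b by auto
    next
      case c
      hence "e \<in> CE ns i j" unfolding CE_def by auto
      hence "e \<in> NE ns j" unfolding NE_def using c by auto
      thus ?thesis using c by auto
    qed
  qed
next
  show "(\<Union>m\<in>{1..k}. NE ns m) \<subseteq> G_edges k ns"
  proof
    fix e assume "e \<in> (\<Union>m\<in>{1..k}. NE ns m)"
    then obtain m where m: "1 \<le> m" "m \<le> k" "e \<in> NE ns m" by auto
    show "e \<in> G_edges k ns"
    proof (cases "e \<in> PE ns m")
      case True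
      then obtain a where "e = {(m,a),(m,a+1)}" "1 \<le> a" "a < ns m" unfolding PE_def by auto
      hence "e \<in> {{(i, a), (i, a + 1)} | i a. 1 \<le> i \<and> i \<le> k \<and> 1 \<le> a \<and> a < ns i}"
        using m by blast
      thus ?thesis unfolding G_edges_def by blast
    next
      case False
      then obtain i where i: "1 \<le> i" "i < m" "e \<in> AE ns i m \<union> BE ns i m \<union> CE ns i m"
        using m unfolding NE_def by auto
      have le: "ns i \<le> ns m" using mono i m by auto
      show ?thesis
      proof -
        { assume "e \<in> AE ns i m"
          then obtain a where "e = {(i,a),(m,a)}" "1 \<le> a" "a < ns i" unfolding AE_def by auto
          moreover have "ns i > 1" using calculation by auto
          ultimately have "e \<in> {{(i, a), (j, a)} | i j a. 1 \<le> i \<and> i < j \<and> j \<le> k \<and> ns i > 1 \<and> 1 \<le> a \<and> a < ns i}"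
            using i m by blast
          hence ?thesis unfolding G_edges_def by blast }
        moreover
        { assume "e \<in> BE ns i m"
          then obtain a where "e = {(i,a+1),(m,a)}" "1 \<le> a" "a < ns i" unfolding BE_def by auto
          moreover have "ns m > 1" using calculation le by auto
          ultimately have "e \<in> {{(i, a + 1), (j, a)} | i j a. 1 \<le> i \<and> i < j \<and> j \<le> k \<and> ns j > 1 \<and> 1 \<le> a \<and> a < ns i}"
            using i m by blast
          hence ?thesis unfolding G_edges_def by blast }
        moreover
        { assume "e \<in> CE ns i m"
          then obtain a where "e = {(i,ns i),(m,a)}" "ns i \<le> a" "a \<le> ns m" unfolding CE_def by auto
          hence "e \<in> {{(i, ns i), (j, a)} | i j a. 1 \<le> i \<and> i < j \<and> j \<le> k \<and> ns i \<le> a \<and> a \<le> ns j}"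
            using i m by blast
          hence ?thesis unfolding G_edges_def by blast }
        ultimately show ?thesis using i by blast
      qed
    qed
  qed
qed

lemma card_PE: "card (PE ns m) = ns m - 1"
  unfolding PE_def by (subst card_image) (auto simp: inj_on_def doubleton_eq_iff)

lemma card_AE: "i \<noteq> m \<Longrightarrow> card (AE ns i m) = ns i - 1"
  unfolding AE_def by (subst card_image) (auto simp: inj_on_def doubleton_eq_iff)

lemma card_BE: "i \<noteq> m \<Longrightarrow> card (BE ns i m) = ns i - 1"
  unfolding BE_def by (subst card_image) (auto simp: inj_on_def doubleton_eq_iff)

lemma card_CE: "i \<noteq> m \<Longrightarrow> card (CE ns i m) = ns m + 1 - ns i"
  unfolding CE_def by (subst card_image) (auto simp: inj_on_def doubleton_eq_iff)

lemma card_ABC: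
  assumes "i \<noteq> m" "1 \<le> ns i" "ns i \<le> ns m"
  shows "card (AE ns i m \<union> BE ns i m \<union> CE ns i m) = ns i + ns m - 1"
proof -
  have d1: "AE ns i m \<inter> BE ns i m = {}"
    using assms(1) unfolding AE_def BE_def by (auto simp: doubleton_eq_iff)
  have d2: "(AE ns i m \<union> BE ns i m) \<inter> CE ns i m = {}"
    using assms(1) unfolding AE_def BE_def CE_def by (auto simp: doubleton_eq_iff)
  have f: "finite (AE ns i m)" "finite (BE ns i m)" "finite (CE ns i m)"
    unfolding AE_def BE_def CE_def by auto
  have "card (AE ns i m \<union> BE ns i m \<union> CE ns i m) = card (AE ns i m) + card (BE ns i m) + card (CE ns i m)"
    using f d1 d2 by (simp add: card_Un_disjoint)
  thus ?thesis using card_AE[OF assms(1)] card_BE[OF assms(1)] card_CE[OF assms(1)] assms by simp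
qed

lemma ABC_fst:
  assumes "e \<in> AE ns i m \<union> BE ns i m \<union> CE ns i m"
  shows "(\<exists>x\<in>e. fst x = i) \<and> (\<forall>x\<in>e. fst x = i \<or> fst x = m)"
  using assms unfolding AE_def BE_def CE_def by auto

lemma PE_fst: "e \<in> PE ns m \<Longrightarrow> (\<exists>x\<in>e. fst x = m) \<and> (\<forall>x\<in>e. fst x = m)"
  unfolding PE_def by auto

lemma NE_fst:
  assumes "e \<in> NE ns m"
  shows "(\<exists>x\<in>e. fst x = m) \<and> (\<forall>x\<in>e. fst x \<le> m)"
proof (cases "e \<in> PE ns m")
  case True thus ?thesis using PE_fst by fastforce
next
  case False
  then obtain i where i: "i < m" "e \<in> AE ns i m \<union> BE ns i m \<union> CE ns i m"
    using assms unfolding NE_def by auto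
  hence "\<exists>x\<in>e. fst x = m" unfolding AE_def BE_def CE_def by auto
  thus ?thesis using ABC_fst[OF i(2)] i(1) by fastforce
qed

lemma card_NE:
  assumes pos: "\<forall>i. 1 \<le> i \<and> i \<le> m \<longrightarrow> 1 \<le> ns i"
    and mono: "\<forall>i j. 1 \<le> i \<and> i \<le> j \<and> j \<le> m \<longrightarrow> ns i \<le> ns j"
    and m: "1 \<le> m"
  shows "card (NE ns m) = (ns m - 1) + (\<Sum>i=1..<m. ns i + ns m - 1)"
proof -
  let ?U = "\<Union>i\<in>{1..<m}. AE ns i m \<union> BE ns i m \<union> CE ns i m"
  have f: "\<And>i. finite (AE ns i m \<union> BE ns i m \<union> CE ns i m)"
    unfolding AE_def BE_def CE_def by auto
  have cu: "card ?U = (\<Sum>i=1..<m. ns i + ns m - 1)"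
  proof (subst card_UN_disjoint)
    show "finite {1..<m}" by simp
    show "\<forall>i\<in>{1..<m}. finite (AE ns i m \<union> BE ns i m \<union> CE ns i m)" using f by blast
    show "\<forall>i\<in>{1..<m}. \<forall>j\<in>{1..<m}. i \<noteq> j \<longrightarrow>
      (AE ns i m \<union> BE ns i m \<union> CE ns i m) \<inter> (AE ns j m \<union> BE ns j m \<union> CE ns j m) = {}"
    proof (intro ballI impI)
      fix i j assume ij: "i \<in> {1..<m}" "j \<in> {1..<m}" "i \<noteq> j"
      show "(AE ns i m \<union> BE ns i m \<union> CE ns i m) \<inter> (AE ns j m \<union> BE ns j m \<union> CE ns j m) = {}"
      proof (rule ccontr)
        assume "\<not> ?thesis"
        then obtain e where e: "e \<in> AE ns i m \<union> BE ns i m \<union> CE ns i m" "e \<in> AE ns j m \<union> BE ns j m \<union> CE ns j m"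
          by blast
        from ABC_fst[OF e(1)] ABC_fst[OF e(2)] ij show False by fastforce
      qed
    qed
    show "(\<Sum>i = 1..<m. card (AE ns i m \<union> BE ns i m \<union> CE ns i m)) = (\<Sum>i = 1..<m. ns i + ns m - 1)"
    proof (rule sum.cong)
      fix i assume "i \<in> {1..<m}"
      thus "card (AE ns i m \<union> BE ns i m \<union> CE ns i m) = ns i + ns m - 1"
        using pos mono m by (intro card_ABC) auto
    qed simp
  qed
  have d: "PE ns m \<inter> ?U = {}"
  proof (rule ccontr)
    assume "\<not> ?thesis"
    then obtain e i where e: "e \<in> PE ns m" "i < m" "e \<in> AE ns i m \<union> BE ns i m \<union> CE ns i m" by force
    from PE_fst[OF e(1)] ABC_fst[OF e(3)] e(2) show False by fastforce
  qed
  have "finite (PE ns m)" "finite ?U" using f unfolding PE_def by auto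
  hence "card (NE ns m) = card (PE ns m) + card ?U"
    unfolding NE_def using d by (simp add: card_Un_disjoint)
  thus ?thesis using cu card_PE by simp
qed

lemma card_G:
  assumes pos: "\<forall>i. 1 \<le> i \<and> i \<le> k \<longrightarrow> 1 \<le> ns i"
    and mono: "\<forall>i j. 1 \<le> i \<and> i \<le> j \<and> j \<le> k \<longrightarrow> ns i \<le> ns j"
  shows "card (G_edges k ns) = (\<Sum>m=1..k. (ns m - 1) + (\<Sum>i=1..<m. ns i + ns m - 1))"
proof -
  have "card (G_edges k ns) = card (\<Union>m\<in>{1..k}. NE ns m)" using G_eq[OF mono] by simp
  also have "\<dots> = (\<Sum>m=1..k. card (NE ns m))"
  proof (rule card_UN_disjoint)
    show "finite {1..k}" by simp
    show "\<forall>m\<in>{1..k}. finite (NE ns m)" unfolding NE_def PE_def AE_def BE_def CE_def by auto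
    show "\<forall>i\<in>{1..k}. \<forall>j\<in>{1..k}. i \<noteq> j \<longrightarrow> NE ns i \<inter> NE ns j = {}"
    proof (intro ballI impI)
      fix i j assume ij: "i \<in> {1..k}" "j \<in> {1..k}" "i \<noteq> j"
      show "NE ns i \<inter> NE ns j = {}"
      proof (rule ccontr)
        assume "\<not> ?thesis"
        then obtain e where e: "e \<in> NE ns i" "e \<in> NE ns j" by blast
        from NE_fst[OF e(1)] NE_fst[OF e(2)] ij show False by fastforce
      qed
    qed
  qed
  also have "\<dots> = (\<Sum>m=1..k. (ns m - 1) + (\<Sum>i=1..<m. ns i + ns m - 1))"
  proof (rule sum.cong)
    fix m assume "m \<in> {1..k}"
    thus "card (NE ns m) = (ns m - 1) + (\<Sum>i=1..<m. ns i + ns m - 1)"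
      using pos mono by (intro card_NE) auto
  qed simp
  finally show ?thesis .
qed

lemma arith_G:
  assumes "\<forall>i. 1 \<le> i \<and> i \<le> k \<longrightarrow> 1 \<le> ns i"
  shows "(\<Sum>m=1..k. (ns m - 1) + (\<Sum>i=1..<m. ns i + ns m - 1)) + ((k+1) choose 2)
         = k * (\<Sum>i=1..k. ns i)"
  using assms
proof (induction k)
  case 0 then show ?case by simp
next
  case (Suc k)
  have IH: "(\<Sum>m=1..k. (ns m - 1) + (\<Sum>i=1..<m. ns i + ns m - 1)) + ((k+1) choose 2)
         = k * (\<Sum>i=1..k. ns i)" using Suc by auto
  have p: "ns (Suc k) \<ge> 1" using Suc.prems by auto
  have inner: "(\<Sum>i=1..<Suc k. ns i + ns (Suc k) - 1) = (\<Sum>i=1..k. ns i) + k * (ns (Suc k) - 1)"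
  proof -
    have "(\<Sum>i=1..<Suc k. ns i + ns (Suc k) - 1) = (\<Sum>i=1..k. ns i + (ns (Suc k) - 1))"
      using p by (intro sum.cong) auto
    also have "\<dots> = (\<Sum>i=1..k. ns i) + k * (ns (Suc k) - 1)" by (simp add: sum.distrib)
    finally show ?thesis .
  qed
  have ch: "(Suc k + 1) choose 2 = ((k+1) choose 2) + (k + 1)"
    by (simp add: choose_two)
  have "(\<Sum>m=1..Suc k. (ns m - 1) + (\<Sum>i=1..<m. ns i + ns m - 1)) + ((Suc k+1) choose 2)
      = (\<Sum>m=1..k. (ns m - 1) + (\<Sum>i=1..<m. ns i + ns m - 1)) + ((k+1) choose 2)
        + (ns (Suc k) - 1) + ((\<Sum>i=1..k. ns i) + k * (ns (Suc k) - 1)) + (k + 1)"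
    using inner ch by simp
  also have "\<dots> = k * (\<Sum>i=1..k. ns i) + (ns (Suc k) - 1) + ((\<Sum>i=1..k. ns i) + k * (ns (Suc k) - 1)) + (k + 1)"
    using IH by simp
  also have "\<dots> = Suc k * (\<Sum>i=1..Suc k. ns i)"
  proof -
    obtain q where q: "ns (Suc k) = Suc q" using p by (cases "ns (Suc k)") auto
    show ?thesis by (simp add: q algebra_simps)
  qed
  finally show ?case .
qed

theorem lemma4:
  fixes k n :: nat and ns :: "nat \<Rightarrow> nat"
  assumes "1 \<le> k" and "k \<le> n"
    and "\<forall>i. 1 \<le> i \<and> i \<le> k \<longrightarrow> 1 \<le> ns i"
    and "\<forall>i j. 1 \<le> i \<and> i \<le> j \<and> j \<le> k \<longrightarrow> ns i \<le> ns j"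
    and "(\<Sum>i = 1..k. ns i) = n"
  shows "int (card (G_edges k ns)) = int k * int n - int ((k + 1) choose 2)"
proof -
  have "card (G_edges k ns) + ((k+1) choose 2) = k * n"
    using card_G[OF assms(3) assms(4)] arith_G[OF assms(3)] assms(5) by simp
  hence "int (card (G_edges k ns)) + int ((k+1) choose 2) = int k * int n"
    by (metis of_nat_add of_nat_mult)
  thus ?thesis by linarith
qed

end
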